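(* Let $(D,S)$ be a uniform steady-state bundle (as defined in the context). Then for any two channels $\mathcal{E},\mathcal{E}'\in D$, the phase steady-state spaces $S(\mathcal{E})$ and $S(\mathcal{E}')$ are isomorphic, i.e., they are in one-to-one correspondence.
   Context: Work with qubits on a lattice (in the thermodynamic limit); states are density matrices $\rho$ and observables $o$ have finite support and finite norm, with $\langle o|\rho\rangle=\mathrm{tr}(o^\dagger\rho)$. A quantum channel is a completely positive trace-preserving map. A channel $\mathcal{E}$ is called local if it obeys a Lieb–Robinson bound: there are constants $C,v,\alpha>0$ (depending only on the lattice and $\mathcal{E}$) such that for every state $\rho$, every observable $o_X$ of norm $1$ supported on $X$, every channel $\mathcal{V}_Y$ supported on $Y$, and every $t\ge 0$, $|\langle o_X|\mathcal{E}^t(\mathcal{V}_Y-\mathcal{I})|\rho\rangle|\le C\min(|X|,|Y|)\min(1,e^{\alpha(t-d_{XY}/v)})$, where $d_{XY}$ is the distance between $X$ and $Y$ and $\mathcal{I}$ is the identity map. A steady-state bundle $(D,S)$ consists of a connected open subset $D$ of the space of local channels together with an assignment to each $\mathcal{E}\in D$ of a convex set $S(\mathcal{E})$ of normalized states with $(\mathcal{E}-\mathcal{I})(\rho)=0$ for all $\rho\in S(\mathcal{E})$ (the phase steady states of $\mathcal{E}$; possibly a proper subset of all steady states). The bundle is uniform if $D$ can be covered by a family of open balls $\{B_i\}$ and there is a rate $\Delta>0$, independent of system size and uniform over all $B_i$, such that: for any $i$, any $\mathcal{E},\mathcal{E}'\in B_i$ and any $\rho\in S(\mathcal{E})$ there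 exists $\rho'\in S(\mathcal{E}')$ with $\mathcal{E}^t\rho'$ approaching $\rho$ exponentially, in the sense $|\langle o|\mathcal{E}^t\rho'-\rho\rangle|\le C_o e^{-\Delta t}\|o\|_\infty$ for every finitely supported observable $o$, with $C_o$ independent of $t$ and of the channels. *)

theory Defs
  imports "HOL-Analysis.Analysis"
begin

text \<open>
  Abstract interface to the quantum lattice system (qubits on a lattice, thermodynamic limit).
  'site : lattice sites;  'v : the real vector space containing the (density-matrix) states;
  'o : finitely supported observables.
\<close>

record ('site, 'v, 'o) qlattice =
  sdist    :: "'site \<Rightarrow> 'site \<Rightarrow> real"
  states   :: "'v set"
  obs_pair :: "'o \<Rightarrow> 'v \<Rightarrow> complex"          \<comment> \<open>the pairing <o|rho> = tr(o^dagger rho)\<close>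
  obs_supp :: "'o \<Rightarrow> 'site set"
  obs_norm :: "'o \<Rightarrow> real"
  ch_supp  :: "('v \<Rightarrow> 'v) \<Rightarrow> 'site set \<Rightarrow> bool"  \<comment> \<open>V is a quantum channel supported on Y\<close>

definition qlattice_axioms :: "('site, 'v::real_vector, 'o) qlattice \<Rightarrow> bool" where
  "qlattice_axioms Q \<longleftrightarrow>
     (\<forall>ob. finite (obs_supp Q ob)) \<and>
     convex (states Q) \<and>
     (\<forall>\<rho>1\<in>states Q. \<forall>\<rho>2\<in>states Q.
        (\<forall>ob. obs_pair Q ob \<rho>1 = obs_pair Q ob \<rho>2) \<longrightarrow> \<rho>1 = \<rho>2)"

definition set_dist :: "('site, 'v, 'o) qlattice \<Rightarrow> 'site set \<Rightarrow> 'site set \<Rightarrow> real" where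
  "set_dist Q X Y = Inf {sdist Q x y | x y. x \<in> X \<and> y \<in> Y}"

text \<open>Local channels: channels (elements of the metric space 'c acting on states via act)
  obeying a Lieb--Robinson bound.\<close>
definition is_local_channel ::
  "('site, 'v::real_vector, 'o) qlattice \<Rightarrow> ('c \<Rightarrow> 'v \<Rightarrow> 'v) \<Rightarrow> 'c \<Rightarrow> bool" where
  "is_local_channel Q act E \<longleftrightarrow>
     (\<forall>\<rho>\<in>states Q. act E \<rho> \<in> states Q) \<and>
     (\<exists>C v \<alpha>. C > 0 \<and> v > 0 \<and> \<alpha> > 0 \<and>
        (\<forall>\<rho>\<in>states Q. \<forall>ob X V Y. \<forall>t::nat.
           finite X \<longrightarrow> obs_supp Q ob \<subseteq> X \<longrightarrow> obs_norm Q ob = 1 \<longrightarrow>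
           finite Y \<longrightarrow> ch_supp Q V Y \<longrightarrow>
           cmod (obs_pair Q ob ((act E ^^ t) (V \<rho>)) - obs_pair Q ob ((act E ^^ t) \<rho>))
             \<le> C * real (min (card X) (card Y))
                 * min 1 (exp (\<alpha> * (real t - set_dist Q X Y / v)))))"

definition local_channels ::
  "('site, 'v::real_vector, 'o) qlattice \<Rightarrow> ('c \<Rightarrow> 'v \<Rightarrow> 'v) \<Rightarrow> 'c set" where
  "local_channels Q act = {E. is_local_channel Q act E}"

definition steady_state_bundle ::
  "('site, 'v::real_vector, 'o) qlattice \<Rightarrow> ('c::metric_space \<Rightarrow> 'v \<Rightarrow> 'v)
     \<Rightarrow> 'c set \<Rightarrow> ('c \<Rightarrow> 'v set) \<Rightarrow> bool" where
  "steady_state_bundle Q act D S \<longleftrightarrow>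
     D \<subseteq> local_channels Q act \<and>
     openin (top_of_set (local_channels Q act)) D \<and>
     connected D \<and>
     (\<forall>E\<in>D. S E \<subseteq> states Q \<and> convex (S E) \<and> (\<forall>\<rho>\<in>S E. act E \<rho> = \<rho>))"

definition uniform_bundle ::
  "('site, 'v::real_vector, 'o) qlattice \<Rightarrow> ('c::metric_space \<Rightarrow> 'v \<Rightarrow> 'v)
     \<Rightarrow> 'c set \<Rightarrow> ('c \<Rightarrow> 'v set) \<Rightarrow> bool" where
  "uniform_bundle Q act D S \<longleftrightarrow>
     (\<exists>(I::'c set set) . (\<forall>B\<in>I. \<exists>c r. c \<in> local_channels Q act \<and> r > 0 \<and>
                                B = ball c r \<inter> local_channels Q act) \<and>
        D \<subseteq> \<Union>I \<and>
        (\<exists>\<Delta>>0. \<exists>Co::'o \<Rightarrow> real.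
           \<forall>B\<in>I. \<forall>E\<in>B \<inter> D. \<forall>E'\<in>B \<inter> D. \<forall>\<rho>\<in>S E. \<exists>\<rho>'\<in>S E'.
             \<forall>ob. \<forall>t::nat. finite (obs_supp Q ob) \<longrightarrow>
               cmod (obs_pair Q ob ((act E ^^ t) \<rho>') - obs_pair Q ob \<rho>)
                 \<le> Co ob * exp (- \<Delta> * real t) * obs_norm Q ob))"

end

theory Submission
  imports Defs
begin

lemma lim_unique_aux:
  fixes a :: "nat \<Rightarrow> complex"
  assumes D: "\<Delta> > 0"
    and h1: "\<And>t. cmod (a t - x) \<le> K * exp (- \<Delta> * real t)"
    and h2: "\<And>t. cmod (a t - y) \<le> K * exp (- \<Delta> * real t)"
  shows "x = y"
proof -
  have le: "cmod (x - y) \<le> 2 * K * exp (- \<Delta> * real t)" for t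
  proof -
    have "x - y = (a t - y) - (a t - x)" by simp
    hence "cmod (x - y) \<le> cmod (a t - x) + cmod (a t - y)"
      using norm_triangle_ineq4[of "a t - y" "a t - x"] by simp
    thus ?thesis using h1[of t] h2[of t] by simp
  qed
  have lim: "(\<lambda>t. 2 * K * exp (- \<Delta> * real t)) \<longlonglongrightarrow> 0"
  proof -
    have e: "exp (- \<Delta> * real t) = exp (- \<Delta>) ^ t" for t
      using exp_of_nat_mult[of t "- \<Delta>"] by (simp add: mult.commute)
    have "(\<lambda>t. exp (- \<Delta>) ^ t) \<longlonglongrightarrow> 0"
      by (rule LIMSEQ_realpow_zero) (use D in auto)
    hence "(\<lambda>t. 2 * K * exp (- \<Delta>) ^ t) \<longlonglongrightarrow> 0"
      by (rule tendsto_mult_right_zero)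
    thus ?thesis unfolding e .
  qed
  have "cmod (x - y) \<le> 0"
    by (rule LIMSEQ_le_const[OF lim]) (use le in auto)
  thus ?thesis by simp
qed

theorem theorem1:
  fixes Q :: "('site, 'v::real_vector, 'o) qlattice"
    and act :: "'c::metric_space \<Rightarrow> 'v \<Rightarrow> 'v"
    and D :: "'c set" and S :: "'c \<Rightarrow> 'v set"
  assumes "qlattice_axioms Q"
    and "steady_state_bundle Q act D S"
    and "uniform_bundle Q act D S"
    and "E \<in> D" and "E' \<in> D"
  shows "\<exists>f. bij_betw f (S E) (S E')"
proof -
  have fin: "\<And>ob. finite (obs_supp Q ob)"
    and sep: "\<And>\<rho>1 \<rho>2. \<rho>1 \<in> states Q \<Longrightarrow> \<rho>2 \<in> states Q \<Longrightarrow>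
        (\<forall>ob. obs_pair Q ob \<rho>1 = obs_pair Q ob \<rho>2) \<Longrightarrow> \<rho>1 = \<rho>2"
    using assms(1) unfolding qlattice_axioms_def by blast+
  have DL: "D \<subseteq> local_channels Q act" and conD: "connected D"
    and Sst: "\<And>E. E \<in> D \<Longrightarrow> S E \<subseteq> states Q"
    using assms(2) unfolding steady_state_bundle_def by blast+
  obtain I :: "'c set set" and \<Delta> and Co :: "'o \<Rightarrow> real" where
    Iball: "\<forall>B\<in>I. \<exists>c r. c \<in> local_channels Q act \<and> r > 0 \<and> B = ball c r \<inter> local_channels Q act"
    and cov: "D \<subseteq> \<Union>I" and Dpos: "\<Delta> > 0"
    and U: "\<forall>B\<in>I. \<forall>E\<in>B \<inter> D. \<forall>E'\<in>B \<inter> D. \<forall>\<rho>\<in>S E. \<exists>\<rho>'\<in>S E'.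
             \<forall>ob. \<forall>t::nat. finite (obs_supp Q ob) \<longrightarrow>
               cmod (obs_pair Q ob ((act E ^^ t) \<rho>') - obs_pair Q ob \<rho>)
                 \<le> Co ob * exp (- \<Delta> * real t) * obs_norm Q ob"
    using assms(3) unfolding uniform_bundle_def by (elim exE conjE) (rule that; assumption)
  have inj: "\<exists>g. inj_on g (S E1) \<and> g ` S E1 \<subseteq> S E2"
    if B: "B \<in> I" and e1: "E1 \<in> B \<inter> D" and e2: "E2 \<in> B \<inter> D" for B E1 E2
  proof -
    have "\<forall>\<rho>\<in>S E1. \<exists>\<rho>'\<in>S E2. \<forall>ob. \<forall>t::nat. finite (obs_supp Q ob) \<longrightarrow>
               cmod (obs_pair Q ob ((act E1 ^^ t) \<rho>') - obs_pair Q ob \<rho>)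
                 \<le> Co ob * exp (- \<Delta> * real t) * obs_norm Q ob"
      using U B e1 e2 by blast
    then obtain g where g: "\<And>\<rho>. \<rho> \<in> S E1 \<Longrightarrow> g \<rho> \<in> S E2"
      and g2: "\<And>\<rho> ob t. \<rho> \<in> S E1 \<Longrightarrow> finite (obs_supp Q ob) \<Longrightarrow>
               cmod (obs_pair Q ob ((act E1 ^^ t) (g \<rho>)) - obs_pair Q ob \<rho>)
                 \<le> Co ob * exp (- \<Delta> * real t) * obs_norm Q ob"
      using bchoice[of "S E1" "\<lambda>\<rho> \<rho>'. \<rho>' \<in> S E2 \<and> (\<forall>ob. \<forall>t::nat. finite (obs_supp Q ob) \<longrightarrow>
               cmod (obs_pair Q ob ((act E1 ^^ t) \<rho>') - obs_pair Q ob \<rho>)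
                 \<le> Co ob * exp (- \<Delta> * real t) * obs_norm Q ob)"] by blast
    have g3: "cmod (obs_pair Q ob ((act E1 ^^ t) (g \<rho>)) - obs_pair Q ob \<rho>)
                 \<le> Co ob * obs_norm Q ob * exp (- \<Delta> * real t)" if "\<rho> \<in> S E1" for \<rho> ob t
      using g2[OF that fin[of ob], of t] by (simp add: mult_ac)
    have "inj_on g (S E1)"
    proof (rule inj_onI)
      fix x y assume x: "x \<in> S E1" and y: "y \<in> S E1" and eq: "g x = g y"
      show "x = y"
      proof (rule sep)
        show "x \<in> states Q" "y \<in> states Q" using x y Sst e1 by auto
        show "\<forall>ob. obs_pair Q ob x = obs_pair Q ob y"
        proof
          fix ob
          show "obs_pair Q ob x = obs_pair Q ob y"
            apply (rule lim_unique_aux[OF Dpos, where a = "\<lambda>t. obs_pair Q ob ((act E1 ^^ t) (g x))"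
                  and K = "Co ob * obs_norm Q ob"])
             apply (rule g3[OF x])
            using g3[OF y] eq by simp
        qed
      qed
    qed
    thus ?thesis using g by blast
  qed
  define R where "R = (\<lambda>E1 E2. \<exists>f. bij_betw f (S E1) (S E2))"
  have "R E E'"
  proof (rule connected_equivalence_relation[OF conD assms(4,5)])
    show "R y x" if "R x y" for x y using that unfolding R_def by (metis bij_betw_inv_into)
    show "R x z" if "R x y" "R y z" for x y z using that unfolding R_def by (metis bij_betw_trans)
    fix a assume a: "a \<in> D"
    then obtain B where B: "B \<in> I" "a \<in> B" using cov by blast
    then obtain c r where Bd: "B = ball c r \<inter> local_channels Q act" using Iball by blast
    have "B \<inter> D = D \<inter> ball c r" using Bd DL by blast
    hence op: "openin (top_of_set D) (B \<inter> D)" by (metis openin_open_Int open_ball)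
    have "\<forall>x\<in>B \<inter> D. R a x"
    proof
      fix x assume x: "x \<in> B \<inter> D"
      obtain g1 where "inj_on g1 (S a)" "g1 ` S a \<subseteq> S x" using inj[OF B(1) _ x] a B by blast
      moreover obtain g2 where "inj_on g2 (S x)" "g2 ` S x \<subseteq> S a" using inj[OF B(1) x] a B by blast
      ultimately show "R a x" unfolding R_def by (rule Schroeder_Bernstein)
    qed
    thus "\<exists>T. openin (top_of_set D) T \<and> a \<in> T \<and> (\<forall>x\<in>T. R a x)" using op a B by blast
  qed
  thus ?thesis unfolding R_def .
qed

end
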